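(* Let $U\in U(N)$ be such that the bistochastic matrix $B$ with $B_{ij}=|U_{ij}|^2$ belongs to the ray of some permutation matrix, i.e. $B=\alpha P+(1-\alpha)W_N$ for a permutation matrix $P$ and some $\alpha\in[0,1]$. For $i,j\in\{1,\dots,N\}$ define $|\psi_{ij}\rangle=\sum_{k=1}^N U_{ik}\,|k\rangle\otimes|k\oplus j\rangle\in\mathbb{C}^N\otimes\mathbb{C}^N$. Then $\{|\psi_{ij}\rangle\}_{i,j=1}^N$ is an orthonormal basis of $\mathbb{C}^N\otimes\mathbb{C}^N$, and all $N^2$ vectors have the same multiset of squared Schmidt coefficients, namely $\{\tfrac{1+\alpha(N-1)}{N},\tfrac{1-\alpha}{N},\dots,\tfrac{1-\alpha}{N}\}$ (with $\tfrac{1-\alpha}{N}$ repeated $N-1$ times). In particular all basis vectors have the same value of any entanglement measure that depends only on the Schmidt coefficients; for $\alpha=1$ the basis is a product basis and for $\alpha=0$ it consists of maximally entangled states.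
   Context: $\{|1\rangle,\dots,|N\rangle\}$ is the computational basis of $\mathbb{C}^N$; $\oplus$ denotes addition modulo $N$ on the labels $\{1,\dots,N\}$. $W_N$ is the $N\times N$ matrix with all entries $1/N$. A bistochastic matrix is a nonnegative real matrix with all row and column sums equal to 1. *)

theory Defs
  imports Complex_Main "HOL-Library.Multiset" "HOL-Combinatorics.Permutations"
begin

text \<open>Conventions: labels are 0,...,N-1 (shifted from 1,...,N). A vector of C^N is a function
  nat => complex (only entries below N matter); a vector of C^N (x) C^N is a coefficient array
  psi a b (coefficient of |a> (x) |b>), required to vanish outside {0..<N}^2.
  An N x N matrix is a function nat => nat => complex (entries i,j < N).\<close>

definition unitary_mat :: "nat \<Rightarrow> (nat \<Rightarrow> nat \<Rightarrow> complex) \<Rightarrow> bool" where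
  "unitary_mat N U \<longleftrightarrow>
     (\<forall>i<N. \<forall>j<N. (\<Sum>k<N. U i k * cnj (U j k)) = (if i = j then 1 else 0)) \<and>
     (\<forall>i<N. \<forall>j<N. (\<Sum>k<N. cnj (U k i) * U k j) = (if i = j then 1 else 0))"

definition vinner :: "nat \<Rightarrow> (nat \<Rightarrow> complex) \<Rightarrow> (nat \<Rightarrow> complex) \<Rightarrow> complex" where
  "vinner N x y = (\<Sum>a<N. cnj (x a) * y a)"

definition orthonormal_fam :: "nat \<Rightarrow> (nat \<Rightarrow> nat \<Rightarrow> complex) \<Rightarrow> bool" where
  "orthonormal_fam N e \<longleftrightarrow> (\<forall>k<N. \<forall>l<N. vinner N (e k) (e l) = (if k = l then 1 else 0))"

definition in_tensor :: "nat \<Rightarrow> (nat \<Rightarrow> nat \<Rightarrow> complex) \<Rightarrow> bool" where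
  "in_tensor N \<psi> \<longleftrightarrow> (\<forall>a b. (N \<le> a \<or> N \<le> b) \<longrightarrow> \<psi> a b = 0)"

definition tinner :: "nat \<Rightarrow> (nat \<Rightarrow> nat \<Rightarrow> complex) \<Rightarrow> (nat \<Rightarrow> nat \<Rightarrow> complex) \<Rightarrow> complex" where
  "tinner N \<phi> \<psi> = (\<Sum>a<N. \<Sum>b<N. cnj (\<phi> a b) * \<psi> a b)"

definition is_onb_tensor ::
  "nat \<Rightarrow> 'i set \<Rightarrow> ('i \<Rightarrow> nat \<Rightarrow> nat \<Rightarrow> complex) \<Rightarrow> bool" where
  "is_onb_tensor N I v \<longleftrightarrow>
     (\<forall>x\<in>I. in_tensor N (v x)) \<and>
     (\<forall>x\<in>I. \<forall>y\<in>I. tinner N (v x) (v y) = (if x = y then 1 else 0)) \<and>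
     (\<forall>\<psi>. in_tensor N \<psi> \<longrightarrow>
        (\<exists>c. \<forall>a b. \<psi> a b = (\<Sum>x\<in>I. c x * v x a b)))"

definition schmidt_decomp ::
  "nat \<Rightarrow> (nat \<Rightarrow> nat \<Rightarrow> complex) \<Rightarrow> (nat \<Rightarrow> real) \<Rightarrow> (nat \<Rightarrow> nat \<Rightarrow> complex)
     \<Rightarrow> (nat \<Rightarrow> nat \<Rightarrow> complex) \<Rightarrow> bool" where
  "schmidt_decomp N \<psi> s e f \<longleftrightarrow>
     (\<forall>k<N. 0 \<le> s k) \<and> orthonormal_fam N e \<and> orthonormal_fam N f \<and>
     (\<forall>a<N. \<forall>b<N. \<psi> a b = (\<Sum>k<N. complex_of_real (s k) * e k a * f k b))"

definition sq_coeffs :: "nat \<Rightarrow> (nat \<Rightarrow> real) \<Rightarrow> real multiset" where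
  "sq_coeffs N s = image_mset (\<lambda>k. (s k)\<^sup>2) (mset_set {..<N})"

text \<open>psi_ij = sum_k U_ik |k> (x) |k (+) j>, with (+) addition mod N.\<close>
definition psi_vec :: "nat \<Rightarrow> (nat \<Rightarrow> nat \<Rightarrow> complex) \<Rightarrow> nat \<times> nat \<Rightarrow> nat \<Rightarrow> nat \<Rightarrow> complex" where
  "psi_vec N U ij a b =
     (if a < N \<and> b < N \<and> b = (a + snd ij) mod N then U (fst ij) a else 0)"

end

theory Submission
  imports Defs "HOL-Number_Theory.Cong"
begin

lemma modinj: fixes k l j N :: nat
  assumes "k < N" "l < N" "(k + j) mod N = (l + j) mod N" shows "k = l"
proof -
  have "[k + j = l + j] (mod N)" using assms(3) by (simp add: cong_def)
  hence "[k = l] (mod N)" by (simp add: cong_add_rcancel_nat)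
  thus ?thesis using assms(1,2) by (simp add: cong_def)
qed
lemma modj: fixes a b N :: nat assumes "a < N" "b < N"
  shows "(a + (b + N - a) mod N) mod N = b"
proof -
  have "(a + (b + N - a) mod N) mod N = (a + (b + N - a)) mod N" by (simp add: mod_add_right_eq)
  also have "a + (b + N - a) = b + N" using assms by simp
  finally show ?thesis using assms by simp
qed

lemma tinner_psi:
  assumes U: "unitary_mat N U" and i: "i < N" "j < N" "i' < N" "j' < N"
  shows "tinner N (psi_vec N U (i,j)) (psi_vec N U (i',j')) = (if (i,j) = (i',j') then 1 else 0)"
proof -
  have inner: "(\<Sum>b<N. cnj (psi_vec N U (i,j) a b) * psi_vec N U (i',j') a b)
     = (if j = j' then cnj (U i a) * U i' a else 0)" if a: "a < N" for a
  proof -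
    have "(\<Sum>b<N. cnj (psi_vec N U (i,j) a b) * psi_vec N U (i',j') a b)
       = (\<Sum>b<N. if b = (a + j) mod N then (if j = j' then cnj (U i a) * U i' a else 0) else 0)"
    proof (rule sum.cong[OF refl])
      fix b assume b: "b \<in> {..<N}"
      have "(a + j) mod N = (a + j') mod N \<Longrightarrow> j = j'"
        using modinj[of j N j' a] i by (simp add: add.commute)
      thus "cnj (psi_vec N U (i,j) a b) * psi_vec N U (i',j') a b
         = (if b = (a + j) mod N then (if j = j' then cnj (U i a) * U i' a else 0) else 0)"
        using a b by (auto simp: psi_vec_def)
    qed
    also have "\<dots> = (if j = j' then cnj (U i a) * U i' a else 0)"
      using a by (simp add: sum.delta')
    finally show ?thesis .
  qed
  have "tinner N (psi_vec N U (i,j)) (psi_vec N U (i',j')) =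
      (\<Sum>a<N. if j = j' then cnj (U i a) * U i' a else 0)"
    unfolding tinner_def using inner by simp
  also have "\<dots> = (if (i,j) = (i',j') then 1 else 0)"
  proof (cases "j = j'")
    case True
    have "(\<Sum>a<N. U i' a * cnj (U i a)) = (if i' = i then 1 else 0)"
      using U i unfolding unitary_mat_def by blast
    then show ?thesis using True by (auto simp: mult.commute)
  qed simp
  finally show ?thesis .
qed

lemma onb: assumes U: "unitary_mat N U"
  shows "is_onb_tensor N ({..<N} \<times> {..<N}) (psi_vec N U)"
  unfolding is_onb_tensor_def
proof (intro conjI ballI allI impI)
  fix x assume "x \<in> {..<N} \<times> {..<N}"
  show "in_tensor N (psi_vec N U x)" by (auto simp: in_tensor_def psi_vec_def)
next
  fix x y assume "x \<in> {..<N} \<times> {..<N}" "y \<in> {..<N} \<times> {..<N}"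
  then obtain i j i' j' where xy: "x = (i,j)" "y = (i',j')" and ij: "i < N" "j < N" "i' < N" "j' < N"
    by (metis SigmaE lessThan_iff)
  show "tinner N (psi_vec N U x) (psi_vec N U y) = (if x = y then 1 else 0)"
    unfolding xy by (rule tinner_psi[OF U ij])
next
  fix \<psi> assume psi: "in_tensor N \<psi>"
  define c where "c = (\<lambda>(i,j). \<Sum>a'<N. cnj (U i a') * \<psi> a' ((a' + j) mod N))"
  show "\<exists>c. \<forall>a b. \<psi> a b = (\<Sum>x\<in>{..<N} \<times> {..<N}. c x * psi_vec N U x a b)"
  proof (intro exI allI)
    fix a b
    show "\<psi> a b = (\<Sum>x\<in>{..<N} \<times> {..<N}. c x * psi_vec N U x a b)"
    proof (cases "a < N \<and> b < N")
      case False
      then show ?thesis using psi by (auto simp: in_tensor_def psi_vec_def)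
    next
      case True
      define j0 where "j0 = (b + N - a) mod N"
      have j0N: "j0 < N" using True by (simp add: j0_def)
      have j0b: "(a + j0) mod N = b" using modj True by (simp add: j0_def)
      have iff: "b = (a + j) mod N \<longleftrightarrow> j = j0" if "j < N" for j
      proof
        assume "b = (a + j) mod N"
        then have "(j + a) mod N = (j0 + a) mod N" using j0b by (simp add: add.commute)
        then show "j = j0" using modinj[of j N j0 a] that j0N by blast
      next
        assume "j = j0" then show "b = (a + j) mod N" using j0b by simp
      qed
      have "(\<Sum>x\<in>{..<N} \<times> {..<N}. c x * psi_vec N U x a b)
          = (\<Sum>i<N. \<Sum>j<N. c (i,j) * psi_vec N U (i,j) a b)"
        by (simp add: sum.cartesian_product)
      also have "\<dots> = (\<Sum>i<N. \<Sum>j<N. if j = j0 then c (i,j0) * U i a else 0)"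
      proof (intro sum.cong refl)
        fix i j assume j: "j \<in> {..<N}"
        show "c (i,j) * psi_vec N U (i,j) a b = (if j = j0 then c (i,j0) * U i a else 0)"
        proof (cases "j = j0")
          case True
          then show ?thesis using \<open>a < N \<and> b < N\<close> j0b by (simp add: psi_vec_def)
        next
          case False
          then have "b \<noteq> (a + j) mod N" using iff j by blast
          then show ?thesis using False by (simp add: psi_vec_def)
        qed
      qed
      also have "\<dots> = (\<Sum>i<N. c (i,j0) * U i a)" using j0N by simp
      also have "\<dots> = (\<Sum>i<N. \<Sum>a'<N. cnj (U i a') * U i a * \<psi> a' ((a' + j0) mod N))"
        by (simp add: c_def sum_distrib_left sum_distrib_right mult_ac)
      also have "\<dots> = (\<Sum>a'<N. (\<Sum>i<N. cnj (U i a') * U i a) * \<psi> a' ((a' + j0) mod N))"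
        by (subst sum.swap) (simp add: sum_distrib_right)
      also have "\<dots> = (\<Sum>a'<N. if a' = a then \<psi> a' ((a' + j0) mod N) else 0)"
      proof (intro sum.cong refl)
        fix a' assume "a' \<in> {..<N}"
        then have "(\<Sum>i<N. cnj (U i a') * U i a) = (if a' = a then 1 else 0)"
          using U True unfolding unitary_mat_def by blast
        then show "(\<Sum>i<N. cnj (U i a') * U i a) * \<psi> a' ((a' + j0) mod N) = (if a' = a then \<psi> a' ((a' + j0) mod N) else 0)"
          by simp
      qed
      also have "\<dots> = \<psi> a b" using True j0b by simp
      finally show ?thesis by simp
    qed
  qed
qed


lemma gram:
  assumes f: "orthonormal_fam N f"
  shows "(\<Sum>b<N. (\<Sum>k<N. X k * f k b) * cnj (\<Sum>k<N. Y k * f k b)) = (\<Sum>k<N. X k * cnj (Y k))"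
proof -
  have "(\<Sum>b<N. (\<Sum>k<N. X k * f k b) * cnj (\<Sum>k<N. Y k * f k b))
      = (\<Sum>b<N. \<Sum>k'<N. \<Sum>k<N. X k * cnj (Y k') * (cnj (f k' b) * f k b))"
    by (simp add: cnj_sum sum_distrib_left sum_distrib_right mult_ac)
  also have "\<dots> = (\<Sum>k'<N. \<Sum>b<N. \<Sum>k<N. X k * cnj (Y k') * (cnj (f k' b) * f k b))"
    by (rule sum.swap)
  also have "\<dots> = (\<Sum>k'<N. \<Sum>k<N. \<Sum>b<N. X k * cnj (Y k') * (cnj (f k' b) * f k b))"
    by (rule sum.cong[OF refl], rule sum.swap)
  also have "\<dots> = (\<Sum>k'<N. \<Sum>k<N. X k * cnj (Y k') * (\<Sum>b<N. cnj (f k' b) * f k b))"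
    by (simp add: sum_distrib_left)
  also have "\<dots> = (\<Sum>k'<N. \<Sum>k<N. if k = k' then X k' * cnj (Y k') else 0)"
    using f unfolding orthonormal_fam_def vinner_def by (intro sum.cong refl) auto
  also have "\<dots> = (\<Sum>k<N. X k * cnj (Y k))" by simp
  finally show ?thesis .
qed

lemma schmidt_unique:
  assumes sd: "schmidt_decomp N \<psi> s e f"
    and D: "\<forall>a<N. \<forall>a'<N. (\<Sum>b<N. \<psi> a b * cnj (\<psi> a' b)) = (if a = a' then complex_of_real (d a) else 0)"
  shows "\<forall>l<N. \<exists>a<N. (s l)\<^sup>2 = d a" and "(\<Sum>l<N. (s l)\<^sup>2) = (\<Sum>a<N. d a)"
proof -
  have e: "orthonormal_fam N e" and f: "orthonormal_fam N f"
    and dec: "\<forall>a<N. \<forall>b<N. \<psi> a b = (\<Sum>k<N. complex_of_real (s k) * e k a * f k b)"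
    using sd unfolding schmidt_decomp_def by auto
  have G: "(\<Sum>b<N. \<psi> a b * cnj (\<psi> a' b)) = (\<Sum>k<N. complex_of_real ((s k)\<^sup>2) * e k a * cnj (e k a'))"
    if a: "a < N" "a' < N" for a a'
  proof -
    have "(\<Sum>b<N. \<psi> a b * cnj (\<psi> a' b)) =
       (\<Sum>b<N. (\<Sum>k<N. (complex_of_real (s k) * e k a) * f k b) * cnj (\<Sum>k<N. (complex_of_real (s k) * e k a') * f k b))"
      using dec a by (intro sum.cong refl) simp
    also have "\<dots> = (\<Sum>k<N. (complex_of_real (s k) * e k a) * cnj (complex_of_real (s k) * e k a'))"
      by (rule gram[OF f])
    also have "\<dots> = (\<Sum>k<N. complex_of_real ((s k)\<^sup>2) * e k a * cnj (e k a'))"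
      by (simp add: power2_eq_square mult_ac)
    finally show ?thesis .
  qed
  have eig: "complex_of_real ((s l)\<^sup>2) * e l a = complex_of_real (d a) * e l a"
    if l: "l < N" and a: "a < N" for l a
  proof -
    have "(\<Sum>a'<N. (\<Sum>b<N. \<psi> a b * cnj (\<psi> a' b)) * e l a') = (\<Sum>a'<N. if a' = a then complex_of_real (d a) * e l a else 0)"
      using D a by (intro sum.cong refl) auto
    also have "\<dots> = complex_of_real (d a) * e l a" using a by simp
    finally have 1: "(\<Sum>a'<N. (\<Sum>b<N. \<psi> a b * cnj (\<psi> a' b)) * e l a') = complex_of_real (d a) * e l a" .
    have "(\<Sum>a'<N. (\<Sum>b<N. \<psi> a b * cnj (\<psi> a' b)) * e l a')
        = (\<Sum>a'<N. \<Sum>k<N. complex_of_real ((s k)\<^sup>2) * e k a * (cnj (e k a') * e l a'))"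
      using G a by (simp add: sum_distrib_right mult.assoc)
    also have "\<dots> = (\<Sum>k<N. \<Sum>a'<N. complex_of_real ((s k)\<^sup>2) * e k a * (cnj (e k a') * e l a'))"
      by (rule sum.swap)
    also have "\<dots> = (\<Sum>k<N. complex_of_real ((s k)\<^sup>2) * e k a * (\<Sum>a'<N. cnj (e k a') * e l a'))"
      by (simp add: sum_distrib_left)
    also have "\<dots> = (\<Sum>k<N. if k = l then complex_of_real ((s l)\<^sup>2) * e l a else 0)"
      using e l unfolding orthonormal_fam_def vinner_def by (intro sum.cong refl) auto
    also have "\<dots> = complex_of_real ((s l)\<^sup>2) * e l a" using l by simp
    finally show ?thesis using 1 by metis
  qed
  show "\<forall>l<N. \<exists>a<N. (s l)\<^sup>2 = d a"
  proof (intro allI impI)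
    fix l assume l: "l < N"
    have "vinner N (e l) (e l) = 1" using e l unfolding orthonormal_fam_def by simp
    then obtain a where a: "a < N" "e l a \<noteq> 0"
      unfolding vinner_def by (metis (no_types, lifting) lessThan_iff mult_eq_0_iff sum.neutral zero_neq_one)
    from eig[OF l a(1)] a(2) have "complex_of_real ((s l)\<^sup>2) = complex_of_real (d a)" by simp
    then show "\<exists>a<N. (s l)\<^sup>2 = d a" using a(1) of_real_eq_iff by blast
  qed
  have "complex_of_real (\<Sum>a<N. d a) = (\<Sum>a<N. \<Sum>b<N. \<psi> a b * cnj (\<psi> a b))"
    using D by simp
  also have "\<dots> = (\<Sum>a<N. \<Sum>k<N. complex_of_real ((s k)\<^sup>2) * (cnj (e k a) * e k a))"
    by (rule sum.cong[OF refl]) (simp add: G mult_ac)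
  also have "\<dots> = (\<Sum>k<N. \<Sum>a<N. complex_of_real ((s k)\<^sup>2) * (cnj (e k a) * e k a))"
    by (rule sum.swap)
  also have "\<dots> = (\<Sum>k<N. complex_of_real ((s k)\<^sup>2) * (\<Sum>a<N. cnj (e k a) * e k a))"
    by (simp add: sum_distrib_left)
  also have "\<dots> = (\<Sum>k<N. complex_of_real ((s k)\<^sup>2))"
    using e unfolding orthonormal_fam_def vinner_def by simp
  finally show "(\<Sum>l<N. (s l)\<^sup>2) = (\<Sum>a<N. d a)"
    by (metis of_real_eq_iff of_real_sum)
qed


lemma sgn_lem: fixes z :: complex assumes "z \<noteq> 0"
  shows "complex_of_real (cmod z) * sgn z = z" and "cnj (sgn z) * sgn z = 1"
proof -
  show "complex_of_real (cmod z) * sgn z = z" using assms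
    by (simp add: sgn_div_norm scaleR_conv_of_real)
  have "cnj (sgn z) * sgn z = complex_of_real ((cmod (sgn z))\<^sup>2)"
    by (metis complex_norm_square mult.commute of_real_power)
  also have "\<dots> = 1" using assms by (simp add: norm_sgn)
  finally show "cnj (sgn z) * sgn z = 1" .
qed

lemma count_lemma:
  fixes t :: "nat \<Rightarrow> real"
  assumes vals: "\<forall>l<N. t l = \<mu> \<or> t l = \<mu> + \<alpha>"
    and sum: "(\<Sum>l<N. t l) = \<alpha> + real N * \<mu>" and N: "1 \<le> N"
  shows "image_mset t (mset_set {..<N}) = {#\<mu> + \<alpha>#} + replicate_mset (N - 1) \<mu>"
proof (cases "\<alpha> = 0")
  case True
  have "image_mset t (mset_set {..<N}) = image_mset (\<lambda>_. \<mu>) (mset_set {..<N})"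
    using vals True by (intro image_mset_cong) auto
  also have "\<dots> = replicate_mset N \<mu>" by (simp add: image_mset_const_eq)
  also have "\<dots> = {#\<mu> + \<alpha>#} + replicate_mset (N - 1) \<mu>"
    using N True by (cases N) (auto simp: replicate_mset_Suc)
  finally show ?thesis .
next
  case False
  define L where "L = {l \<in> {..<N}. t l = \<mu> + \<alpha>}"
  define R where "R = {..<N} - L"
  have fin: "finite L" "finite R" by (auto simp: L_def R_def)
  have LR: "{..<N} = L \<union> R" "L \<inter> R = {}" by (auto simp: L_def R_def)
  have tR: "\<forall>l\<in>R. t l = \<mu>" using vals by (auto simp: L_def R_def)
  have cR: "card R = N - card L" unfolding R_def
    by (subst card_Diff_subset) (auto simp: L_def)
  have cL: "card L \<le> N" using card_mono[of "{..<N}" L] by (auto simp: L_def)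
  have "(\<Sum>l<N. t l) = (\<Sum>l\<in>L. t l) + (\<Sum>l\<in>R. t l)"
    using LR fin by (simp add: sum.union_disjoint)
  also have "\<dots> = real (card L) * (\<mu> + \<alpha>) + real (card R) * \<mu>"
    using tR by (simp add: L_def)
  also have "\<dots> = real (card L) * \<alpha> + real N * \<mu>"
    using cR cL by (simp add: of_nat_diff algebra_simps)
  finally have "real (card L) * \<alpha> = \<alpha>" using sum by simp
  then have "card L = 1" using False by simp
  then obtain l0 where l0: "L = {l0}" by (rule card_1_singletonE)
  have l0N: "l0 < N" "t l0 = \<mu> + \<alpha>" using l0 by (auto simp: L_def)
  have "{..<N} = insert l0 R" using LR l0 by auto
  then have "mset_set {..<N} = add_mset l0 (mset_set R)"
    using fin LR l0 by (simp add: mset_set.insert)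
  then have "image_mset t (mset_set {..<N}) = add_mset (\<mu> + \<alpha>) (image_mset t (mset_set R))"
    using l0N by simp
  also have "image_mset t (mset_set R) = image_mset (\<lambda>_. \<mu>) (mset_set R)"
    using tR fin by (intro image_mset_cong) auto
  also have "\<dots> = replicate_mset (N - 1) \<mu>" using cR \<open>card L = 1\<close> by (simp add: image_mset_const_eq)
  finally show ?thesis by simp
qed

lemma psi_D:
  assumes j: "j < N"
  shows "\<forall>a<N. \<forall>a'<N. (\<Sum>b<N. psi_vec N U (i,j) a b * cnj (psi_vec N U (i,j) a' b))
           = (if a = a' then complex_of_real ((cmod (U i a))\<^sup>2) else 0)"
proof (intro allI impI)
  fix a a' assume a: "a < N" "a' < N"
  have "(\<Sum>b<N. psi_vec N U (i,j) a b * cnj (psi_vec N U (i,j) a' b))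
      = (\<Sum>b<N. if b = (a + j) mod N then (if a = a' then U i a * cnj (U i a) else 0) else 0)"
  proof (rule sum.cong[OF refl])
    fix b assume b: "b \<in> {..<N}"
    have "(a + j) mod N = (a' + j) mod N \<Longrightarrow> a = a'"
      using modinj[of a N a' j] a by simp
    thus "psi_vec N U (i,j) a b * cnj (psi_vec N U (i,j) a' b)
        = (if b = (a + j) mod N then (if a = a' then U i a * cnj (U i a) else 0) else 0)"
      using a b by (auto simp: psi_vec_def)
  qed
  also have "\<dots> = (if a = a' then U i a * cnj (U i a) else 0)"
    using a by (simp add: sum.delta')
  also have "\<dots> = (if a = a' then complex_of_real ((cmod (U i a))\<^sup>2) else 0)"
    by (metis complex_norm_square of_real_power)
  finally show "(\<Sum>b<N. psi_vec N U (i,j) a b * cnj (psi_vec N U (i,j) a' b))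
           = (if a = a' then complex_of_real ((cmod (U i a))\<^sup>2) else 0)" .
qed

lemma exists_sd:
  assumes j: "j < N"
  shows "\<exists>s e f. schmidt_decomp N (psi_vec N U (i, j)) s e f"
proof -
  define ph where "ph = (\<lambda>z::complex. if z = 0 then 1 else sgn z)"
  have ph1: "cnj (ph z) * ph z = 1" for z unfolding ph_def using sgn_lem by auto
  have ph2: "complex_of_real (cmod z) * ph z = z" for z unfolding ph_def using sgn_lem by auto
  define s where "s = (\<lambda>a. cmod (U i a))"
  define e where "e = (\<lambda>a x. if x = a then ph (U i a) else 0)"
  define f where "f = (\<lambda>a b. if b = (a + j) mod N then (1::complex) else 0)"
  have "orthonormal_fam N e"
    unfolding orthonormal_fam_def vinner_def
  proof (intro allI impI)
    fix k l assume kl: "k < N" "l < N"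
    have "(\<Sum>a<N. cnj (e k a) * e l a) = (\<Sum>a<N. if a = k then (if k = l then 1 else 0) else 0)"
      by (rule sum.cong[OF refl]) (auto simp: e_def ph1)
    also have "\<dots> = (if k = l then 1 else 0)" using kl by simp
    finally show "(\<Sum>a<N. cnj (e k a) * e l a) = (if k = l then 1 else 0)" .
  qed
  moreover have "orthonormal_fam N f"
    unfolding orthonormal_fam_def vinner_def
  proof (intro allI impI)
    fix k l assume kl: "k < N" "l < N"
    have "(\<Sum>b<N. cnj (f k b) * f l b) = (\<Sum>b<N. if b = (k + j) mod N then (if k = l then 1 else 0) else 0)"
    proof (rule sum.cong[OF refl])
      fix b assume "b \<in> {..<N}"
      have "(k + j) mod N = (l + j) mod N \<Longrightarrow> k = l" using modinj[of k N l j] kl by simp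
      then show "cnj (f k b) * f l b = (if b = (k + j) mod N then (if k = l then 1 else 0) else 0)"
        by (auto simp: f_def)
    qed
    also have "\<dots> = (if k = l then 1 else 0)" using kl by (simp add: sum.delta')
    finally show "(\<Sum>b<N. cnj (f k b) * f l b) = (if k = l then 1 else 0)" .
  qed
  moreover have "\<forall>a<N. \<forall>b<N. psi_vec N U (i, j) a b = (\<Sum>k<N. complex_of_real (s k) * e k a * f k b)"
  proof (intro allI impI)
    fix a b assume ab: "a < N" "b < N"
    have "(\<Sum>k<N. complex_of_real (s k) * e k a * f k b) = (\<Sum>k<N. if k = a then complex_of_real (s a) * ph (U i a) * f a b else 0)"
      by (rule sum.cong[OF refl]) (auto simp: e_def)
    also have "\<dots> = complex_of_real (s a) * ph (U i a) * f a b" using ab by simp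
    also have "\<dots> = U i a * f a b" by (simp add: s_def ph2)
    also have "\<dots> = psi_vec N U (i, j) a b" using ab by (simp add: f_def psi_vec_def)
    finally show "psi_vec N U (i, j) a b = (\<Sum>k<N. complex_of_real (s k) * e k a * f k b)" by simp
  qed
  moreover have "\<forall>k<N. 0 \<le> s k" by (simp add: s_def)
  ultimately show ?thesis unfolding schmidt_decomp_def by blast
qed

theorem mainTheorem6:
  fixes N :: nat and U :: "nat \<Rightarrow> nat \<Rightarrow> complex" and \<sigma> :: "nat \<Rightarrow> nat" and \<alpha> :: real
  assumes "1 \<le> N"
    and "unitary_mat N U"
    and "\<sigma> permutes {..<N}"
    and "0 \<le> \<alpha>" and "\<alpha> \<le> 1"
    and "\<forall>i<N. \<forall>j<N. (cmod (U i j))\<^sup>2 =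
            \<alpha> * (if \<sigma> i = j then 1 else 0) + (1 - \<alpha>) * (1 / real N)"
  shows "is_onb_tensor N ({..<N} \<times> {..<N}) (psi_vec N U)
       \<and> (\<forall>i<N. \<forall>j<N.
            (\<exists>s e f. schmidt_decomp N (psi_vec N U (i, j)) s e f) \<and>
            (\<forall>s e f. schmidt_decomp N (psi_vec N U (i, j)) s e f \<longrightarrow>
               sq_coeffs N s = {# (1 + \<alpha> * (real N - 1)) / real N #}
                               + replicate_mset (N - 1) ((1 - \<alpha>) / real N)))"
proof (intro conjI allI impI)
  show "is_onb_tensor N ({..<N} \<times> {..<N}) (psi_vec N U)" by (rule onb[OF assms(2)])
next
  fix i j assume i: "i < N" and j: "j < N"
  show "\<exists>s e f. schmidt_decomp N (psi_vec N U (i, j)) s e f" by (rule exists_sd[OF j])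
next
  fix i j s e f assume i: "i < N" and j: "j < N" and sd: "schmidt_decomp N (psi_vec N U (i, j)) s e f"
  define \<mu> where "\<mu> = (1 - \<alpha>) * (1 / real N)"
  define d where "d = (\<lambda>a. \<alpha> * (if \<sigma> i = a then 1 else 0) + \<mu>)"
  have Nr: "real N > 0" using assms(1) by simp
  have si: "\<sigma> i < N" using permutes_in_image[OF assms(3)] i by simp
  have D: "\<forall>a<N. \<forall>a'<N. (\<Sum>b<N. psi_vec N U (i,j) a b * cnj (psi_vec N U (i,j) a' b))
           = (if a = a' then complex_of_real (d a) else 0)"
    using psi_D[OF j, of U i] assms(6) i unfolding d_def \<mu>_def by simp
  note su = schmidt_unique[OF sd D]
  have vals: "\<forall>l<N. (s l)\<^sup>2 = \<mu> \<or> (s l)\<^sup>2 = \<mu> + \<alpha>"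
    using su(1) unfolding d_def by (metis add.commute add_0 mult_zero_right mult.right_neutral)
  have "(\<Sum>a<N. d a) = (\<Sum>a<N. \<alpha> * (if \<sigma> i = a then 1 else 0)) + (\<Sum>a<N. \<mu>)"
    unfolding d_def by (simp add: sum.distrib)
  also have "(\<Sum>a<N. \<alpha> * (if \<sigma> i = a then 1 else 0)) = (\<Sum>a<N. if \<sigma> i = a then \<alpha> else 0)"
    by (rule sum.cong[OF refl]) simp
  also have "\<dots> = \<alpha>" using si by (simp add: sum.delta)
  also have "\<alpha> + (\<Sum>a<N. \<mu>) = \<alpha> + real N * \<mu>" by simp
  finally have sm: "(\<Sum>l<N. (s l)\<^sup>2) = \<alpha> + real N * \<mu>" using su(2) by simp
  have "sq_coeffs N s = {#\<mu> + \<alpha>#} + replicate_mset (N - 1) \<mu>"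
    unfolding sq_coeffs_def by (rule count_lemma[OF vals sm assms(1)])
  moreover have "\<mu> + \<alpha> = (1 + \<alpha> * (real N - 1)) / real N" "\<mu> = (1 - \<alpha>) / real N"
    using Nr unfolding \<mu>_def by (auto simp: field_simps)
  ultimately show "sq_coeffs N s = {# (1 + \<alpha> * (real N - 1)) / real N #}
                               + replicate_mset (N - 1) ((1 - \<alpha>) / real N)" by simp
qed

end
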